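(* Fix $\beta\in\mathbb{R}$. Consider the working variance model $\{\nu_\gamma:\gamma\in\Gamma\}$, $\Gamma=\mathbb{R}_+^2$, given by $$\nu_\gamma(x)=\gamma_1\,\mathbb{1}_{[0,\infty)}(x)+\gamma_2\,\mathbb{1}_{(-\infty,0)}(x),\qquad \gamma=(\gamma_1,\gamma_2)\in\mathbb{R}_+^2 .$$ Then for any $\tau,\sigma>0$, any (arbitrarily small) $\alpha>0$ and any (arbitrarily large) $\eta\ge 1$, there exists a distribution $P\in\mathcal{P}_{\mathrm{Het}}$ such that $$\inf_{\tilde P\in\mathcal{P}_{\mathrm{Hom}}}\mathrm{KL}(\tilde P\,\|\,P)\le\alpha,\qquad \mathrm{Var}_P(X)=\tau^2,\qquad \mathbb{E}_P[\mathrm{Var}_P(Y\mid X)]=\sigma^2,$$ and $$\frac{V_P(\gamma_{P,\mathrm{EQML}})\wedge V_P(\gamma_{P,\mathrm{GEE}})}{\inf_{\gamma\in\Gamma}V_P(\gamma)}\ \ge\ \eta .$$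
   Context: All distributions are joint laws $P$ of a pair $(Y,X)\in\mathbb{R}\times\mathbb{R}$ (univariate response and univariate random covariate). $\mathcal{P}_{\mathrm{Hom}}$ is the set of laws $P$ such that $Y\mid X\sim N(X\beta,s^2)$ for some constant $s>0$ (with arbitrary marginal law of $X$). $\mathcal{P}_{\mathrm{Het}}$ is the set of laws $P$ such that $Y\mid X\sim N(X\beta,v(X))$ for some measurable function $v$ with $\mathbb{E}[v(X)]<\infty$ and $v(X)>0$ almost surely (with arbitrary marginal law of $X$). For laws $P_1,P_2$ absolutely continuous with respect to Lebesgue measure, $\mathrm{KL}(P_1\|P_2)=\int\log\big(\tfrac{dP_1}{dP_2}\big)\,dP_1$. For $\gamma\in\Gamma$, the sandwich loss (asymptotic variance of the weighted least squares estimator with weights $1/\nu_\gamma$) is $$V_P(\gamma)=\mathbb{E}_P\Big[\frac{X^2}{\nu_\gamma(X)}\Big]^{-2}\,\mathbb{E}_P\Big[\frac{\mathrm{Var}_P(Y\mid X)\,X^2}{\nu_\gamma(X)^2}\Big].$$ The population EQML and GEE dispersion parameters are $$\gamma_{P,\mathrm{EQML}}=\operatorname*{argmin}_{\gamma\in\Gamma}\mathbb{E}_P\Big[\log\nu_\gamma(X)+\frac{\mathrm{Var}_P(Y\mid X)}{\nu_\gamma(X)}\Big],\qquad \gamma_{P,\mathrm{GEE}}=\operatorname*{argmin}_{\gamma\in\Gamma}\mathbb{E}_P\Big[\big(\nu_\gamma(X)-\mathrm{Var}_P(Y\mid X)\big)^2\Big].$$ $a\wedge b$ denotes $\min(a,b)$.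 *)

theory Defs
  imports "HOL-Probability.Probability"
begin

text \<open>Joint laws are measures on pairs (Y, X). The law with X-marginal mu and
  Y given X = x distributed as N(x * beta, v x) (variance v x, standard deviation sqrt (v x)).\<close>
definition cond_normal_law :: "real measure \<Rightarrow> real \<Rightarrow> (real \<Rightarrow> real) \<Rightarrow> (real \<times> real) measure" where
  "cond_normal_law \<mu> \<beta> v =
     \<mu> \<bind> (\<lambda>x. distr (density lborel (\<lambda>y. ennreal (normal_density (x * \<beta>) (sqrt (v x)) y)))
                     (borel :: (real \<times> real) measure) (\<lambda>y. (y, x)))"

definition het_model :: "real measure \<Rightarrow> (real \<Rightarrow> real) \<Rightarrow> bool" where
  "het_model \<mu> v \<longleftrightarrow> prob_space \<mu> \<and> sets \<mu> = sets borel \<and> v \<in> borel_measurable borel \<and>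
     (AE x in \<mu>. 0 < v x) \<and> integrable \<mu> v"

definition in_Het :: "real \<Rightarrow> (real \<times> real) measure \<Rightarrow> bool" where
  "in_Het \<beta> P \<longleftrightarrow> (\<exists>\<mu> v. het_model \<mu> v \<and> P = cond_normal_law \<mu> \<beta> v)"

definition in_Hom :: "real \<Rightarrow> (real \<times> real) measure \<Rightarrow> bool" where
  "in_Hom \<beta> P \<longleftrightarrow> (\<exists>\<mu> s. prob_space \<mu> \<and> sets \<mu> = sets borel \<and> 0 < s \<and>
                       P = cond_normal_law \<mu> \<beta> (\<lambda>_. s\<^sup>2))"

text \<open>KL(P1 || P2) = integral of log (dP1/dP2) dP1 (natural logarithm).\<close>
definition KL :: "(real \<times> real) measure \<Rightarrow> (real \<times> real) measure \<Rightarrow> real" where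
  "KL P1 P2 = KL_divergence (exp 1) P2 P1"

definition Gamma :: "(real \<times> real) set" where
  "Gamma = {\<gamma>. 0 < fst \<gamma> \<and> 0 < snd \<gamma>}"

definition nu :: "real \<times> real \<Rightarrow> real \<Rightarrow> real" where
  "nu \<gamma> x = (if 0 \<le> x then fst \<gamma> else snd \<gamma>)"

text \<open>Sandwich loss; cv is the conditional variance function, i.e. Var_P(Y | X) = cv X.\<close>
definition sandwich :: "(real \<times> real) measure \<Rightarrow> (real \<Rightarrow> real) \<Rightarrow> real \<times> real \<Rightarrow> real" where
  "sandwich P cv \<gamma> =
     (\<integral>z. (snd z)\<^sup>2 / nu \<gamma> (snd z) \<partial>P) powi (-2) *
     (\<integral>z. cv (snd z) * (snd z)\<^sup>2 / (nu \<gamma> (snd z))\<^sup>2 \<partial>P)"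

definition eqml_obj :: "(real \<times> real) measure \<Rightarrow> (real \<Rightarrow> real) \<Rightarrow> real \<times> real \<Rightarrow> real" where
  "eqml_obj P cv \<gamma> = (\<integral>z. ln (nu \<gamma> (snd z)) + cv (snd z) / nu \<gamma> (snd z) \<partial>P)"

definition gee_obj :: "(real \<times> real) measure \<Rightarrow> (real \<Rightarrow> real) \<Rightarrow> real \<times> real \<Rightarrow> real" where
  "gee_obj P cv \<gamma> = (\<integral>z. (nu \<gamma> (snd z) - cv (snd z))\<^sup>2 \<partial>P)"

definition is_argmin_on :: "((real \<times> real) \<Rightarrow> real) \<Rightarrow> (real \<times> real) set \<Rightarrow> real \<times> real \<Rightarrow> bool" where
  "is_argmin_on f S g \<longleftrightarrow> g \<in> S \<and> (\<forall>h\<in>S. f g \<le> f h)"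

end

theory Submission
  imports Defs
begin


definition kern :: "real \<Rightarrow> (real \<Rightarrow> real) \<Rightarrow> real \<Rightarrow> (real \<times> real) measure" where
  "kern \<beta> v x = distr (density lborel (\<lambda>y. ennreal (normal_density (x * \<beta>) (sqrt (v x)) y)))
                     (borel :: (real \<times> real) measure) (\<lambda>y. (y, x))"

lemma meas_normal[measurable]:
  assumes [measurable]: "v \<in> borel_measurable borel"
  shows "(\<lambda>(x,y). ennreal (normal_density (x * \<beta>) (sqrt (v x)) y)) \<in> borel_measurable (borel \<Otimes>\<^sub>M borel)"
  unfolding normal_density_def by measurable

lemma emeasure_kern:
  assumes "A \<in> sets borel"
  shows "emeasure (kern \<beta> v x) A = (\<integral>\<^sup>+y. ennreal (normal_density (x * \<beta>) (sqrt (v x)) y) * indicator A (y,x) \<partial>lborel)"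
proof -
  have "(\<lambda>y. (y,x)) -` A \<in> sets borel"
    using measurable_sets[of "\<lambda>y::real. (y,x)" borel borel A] assms by simp
  then show ?thesis
    unfolding kern_def using assms
    by (subst emeasure_distr) (auto simp: emeasure_density intro!: nn_integral_cong split: split_indicator)
qed

lemma kern_meas:
  assumes v[measurable]: "v \<in> borel_measurable borel" and pos: "\<And>x. 0 < v x" and M: "sets M = sets borel"
  shows "kern \<beta> v \<in> measurable M (subprob_algebra borel)"
proof (rule measurable_subprob_algebra)
  fix a
  show "subprob_space (kern \<beta> v a)"
    unfolding kern_def using pos[of a]
    by (intro prob_space_imp_subprob_space prob_space.prob_space_distr prob_space_normal_density) auto
  show "sets (kern \<beta> v a) = sets borel" by (simp add: kern_def)
next
  fix A :: "(real \<times> real) set" assume A[measurable]: "A \<in> sets borel"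
  have "(\<lambda>x. \<integral>\<^sup>+y. ennreal (normal_density (x * \<beta>) (sqrt (v x)) y) * indicator A (y,x) \<partial>lborel) \<in> borel_measurable borel"
    unfolding normal_density_def by measurable
  then show "(\<lambda>a. emeasure (kern \<beta> v a) A) \<in> borel_measurable M"
    using A by (simp add: emeasure_kern measurable_cong_sets[OF M refl])
qed

lemma fst_borel[measurable]: "fst \<in> measurable (borel :: (real \<times> real) measure) borel"
  using measurable_fst[of "borel::real measure" "borel::real measure", unfolded borel_prod] .

lemma snd_borel[measurable]: "snd \<in> measurable (borel :: (real \<times> real) measure) borel"
  using measurable_snd[of "borel::real measure" "borel::real measure", unfolded borel_prod] .

lemma cnl_kern: "cond_normal_law \<mu> \<beta> v = \<mu> \<bind> kern \<beta> v"
  unfolding cond_normal_law_def kern_def ..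

context
  fixes \<mu> :: "real measure" and \<beta> :: real and v :: "real \<Rightarrow> real"
  assumes v[measurable]: "v \<in> borel_measurable borel" and pos: "\<And>x. 0 < v x"
    and M: "sets \<mu> = sets borel" and pr: "prob_space \<mu>"
begin

lemma K: "kern \<beta> v \<in> measurable \<mu> (subprob_algebra borel)"
  by (rule kern_meas[OF v pos M])

lemma sp_ne: "space \<mu> \<noteq> {}"
  using sets_eq_imp_space_eq[OF M] by simp

lemma sets_cnl: "sets (cond_normal_law \<mu> \<beta> v) = sets borel"
  unfolding cnl_kern
  by (rule sets_bind[OF _ sp_ne]) (simp add: kern_def)

lemma snd_cnl: "snd \<in> measurable (cond_normal_law \<mu> \<beta> v) borel"
  by (subst measurable_cong_sets[OF sets_cnl refl]) (rule snd_borel)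

lemma emeasure_cnl: "A \<in> sets borel \<Longrightarrow> emeasure (cond_normal_law \<mu> \<beta> v) A = (\<integral>\<^sup>+x. emeasure (kern \<beta> v x) A \<partial>\<mu>)"
  unfolding cnl_kern by (rule emeasure_bind[OF sp_ne K])

lemma kern_prob: "prob_space (kern \<beta> v x)"
  unfolding kern_def using pos[of x]
  by (intro prob_space.prob_space_distr prob_space_normal_density) auto

lemma prob_cnl: "prob_space (cond_normal_law \<mu> \<beta> v)"
proof (rule prob_spaceI)
  have sp: "space (cond_normal_law \<mu> \<beta> v) = UNIV"
    using sets_eq_imp_space_eq[OF sets_cnl] by simp
  have "emeasure (cond_normal_law \<mu> \<beta> v) UNIV = (\<integral>\<^sup>+x. 1 \<partial>\<mu>)"
    apply (subst emeasure_cnl, simp)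
    apply (rule nn_integral_cong)
    using prob_space.emeasure_space_1[OF kern_prob] by (simp add: kern_def)
  also have "\<dots> = 1" using prob_space.emeasure_space_1[OF pr] by simp
  finally show "emeasure (cond_normal_law \<mu> \<beta> v) (space (cond_normal_law \<mu> \<beta> v)) = 1"
    using sp by simp
qed

lemma distr_snd_cnl: "distr (cond_normal_law \<mu> \<beta> v) borel snd = \<mu>"
proof (rule measure_eqI)
  show "sets (distr (cond_normal_law \<mu> \<beta> v) borel snd) = sets \<mu>" using M by simp
  fix B assume B: "B \<in> sets (distr (cond_normal_law \<mu> \<beta> v) borel snd)"
  then have B': "B \<in> sets borel" by simp
  have sp: "space (cond_normal_law \<mu> \<beta> v) = UNIV"
    using sets_eq_imp_space_eq[OF sets_cnl] by simp
  have "snd -` B \<in> sets (borel :: (real \<times> real) measure)"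
  proof -
    have "snd \<in> measurable (borel :: (real \<times> real) measure) borel" using measurable_snd[of "borel::real measure" "borel::real measure", unfolded borel_prod] .
    from measurable_sets[OF this B'] show ?thesis by simp
  qed
  then have "emeasure (distr (cond_normal_law \<mu> \<beta> v) borel snd) B = (\<integral>\<^sup>+x. emeasure (kern \<beta> v x) (snd -` B) \<partial>\<mu>)"
    using B' sp snd_cnl
    by (subst emeasure_distr) (auto simp: sets_cnl emeasure_cnl)
  also have "\<dots> = (\<integral>\<^sup>+x. indicator B x \<partial>\<mu>)"
  proof (rule nn_integral_cong)
    fix x
    have pre: "(\<lambda>y. (y,x)) -` (snd -` B) = (if x \<in> B then UNIV else {})" by auto
    have "emeasure (kern \<beta> v x) (snd -` B) = emeasure (density lborel (\<lambda>y. ennreal (normal_density (x * \<beta>) (sqrt (v x)) y))) ((\<lambda>y. (y,x)) -` (snd -` B))"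
      unfolding kern_def using \<open>snd -` B \<in> _\<close> by (subst emeasure_distr) auto
    also have "\<dots> = (if x \<in> B then emeasure (density lborel (\<lambda>y. ennreal (normal_density (x * \<beta>) (sqrt (v x)) y))) UNIV else 0)"
      unfolding pre by simp
    also have "\<dots> = indicator B x"
      using prob_space.emeasure_space_1[OF prob_space_normal_density, of "sqrt (v x)" "x*\<beta>"] pos[of x] by simp
    finally show "emeasure (kern \<beta> v x) (snd -` B) = indicator B x" .
  qed
  also have "\<dots> = emeasure \<mu> B" using B' M by simp
  finally show "emeasure (distr (cond_normal_law \<mu> \<beta> v) borel snd) B = emeasure \<mu> B" .
qed

lemma integral_cnl:
  fixes f :: "real \<Rightarrow> real" assumes [measurable]: "f \<in> borel_measurable borel"
  shows "(\<integral>z. f (snd z) \<partial>cond_normal_law \<mu> \<beta> v) = (\<integral>x. f x \<partial>\<mu>)"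
    and "integrable (cond_normal_law \<mu> \<beta> v) (\<lambda>z. f (snd z)) \<longleftrightarrow> integrable \<mu> f"
proof -
  have sm: "snd \<in> measurable (cond_normal_law \<mu> \<beta> v) borel"
    using snd_cnl .
  show "(\<integral>z. f (snd z) \<partial>cond_normal_law \<mu> \<beta> v) = (\<integral>x. f x \<partial>\<mu>)"
    using integral_distr[OF sm, of f] distr_snd_cnl by simp
  show "integrable (cond_normal_law \<mu> \<beta> v) (\<lambda>z. f (snd z)) \<longleftrightarrow> integrable \<mu> f"
    using integrable_distr_eq[OF sm, of f] distr_snd_cnl by simp
qed

lemma cnl_density:
  assumes mu: "\<mu> = density lborel (\<lambda>x. ennreal (g x))" and g[measurable]: "g \<in> borel_measurable borel"
  shows "cond_normal_law \<mu> \<beta> v = density lborel (\<lambda>z. ennreal (g (snd z) * normal_density (snd z * \<beta>) (sqrt (v (snd z))) (fst z)))"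
proof (rule measure_eqI)
  show "sets (cond_normal_law \<mu> \<beta> v) = sets (density lborel (\<lambda>z. ennreal (g (snd z) * normal_density (snd z * \<beta>) (sqrt (v (snd z))) (fst z))))"
    by (simp add: sets_cnl)
  fix A assume "A \<in> sets (cond_normal_law \<mu> \<beta> v)"
  then have A[measurable]: "A \<in> sets borel" by (simp add: sets_cnl)
  have Km: "(\<lambda>x. emeasure (kern \<beta> v x) A) \<in> borel_measurable lborel"
    using measurable_emeasure_kernel[OF K A] M by (simp add: measurable_cong_sets[OF M refl])
  have "emeasure (cond_normal_law \<mu> \<beta> v) A = (\<integral>\<^sup>+x. emeasure (kern \<beta> v x) A \<partial>\<mu>)"
    by (rule emeasure_cnl[OF A])
  also have "\<dots> = (\<integral>\<^sup>+x. ennreal (g x) * emeasure (kern \<beta> v x) A \<partial>lborel)"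
    unfolding mu using Km by (subst nn_integral_density) auto
  also have "\<dots> = (\<integral>\<^sup>+x. \<integral>\<^sup>+y. ennreal (g x) * (ennreal (normal_density (x * \<beta>) (sqrt (v x)) y) * indicator A (y,x)) \<partial>lborel \<partial>lborel)"
    by (simp add: emeasure_kern[OF A] nn_integral_cmult)
  also have "\<dots> = (\<integral>\<^sup>+z. ennreal (g (snd z)) * (ennreal (normal_density (snd z * \<beta>) (sqrt (v (snd z))) (fst z)) * indicator A z) \<partial>(lborel \<Otimes>\<^sub>M lborel))"
  proof -
    have m: "(\<lambda>z. ennreal (g (snd z)) * (ennreal (normal_density (snd z * \<beta>) (sqrt (v (snd z))) (fst z)) * indicator A z)) \<in> borel_measurable (lborel \<Otimes>\<^sub>M lborel)"
    proof -
      have "(\<lambda>z. ennreal (g (snd z)) * (ennreal (normal_density (snd z * \<beta>) (sqrt (v (snd z))) (fst z)) * indicator A z)) \<in> borel_measurable borel"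
        unfolding normal_density_def by measurable
      then show ?thesis unfolding lborel_prod by simp
    qed
    show ?thesis
      by (subst pair_sigma_finite.nn_integral_snd[symmetric, OF _ m])
        (auto simp: pair_sigma_finite_def lborel.sigma_finite_measure_axioms)
  qed
  also have "\<dots> = (\<integral>\<^sup>+z. ennreal (g (snd z) * normal_density (snd z * \<beta>) (sqrt (v (snd z))) (fst z)) * indicator A z \<partial>lborel)"
    unfolding lborel_prod
    by (intro nn_integral_cong) (auto simp: ennreal_mult'' normal_density_nonneg split: split_indicator)
  also have "\<dots> = emeasure (density lborel (\<lambda>z. ennreal (g (snd z) * normal_density (snd z * \<beta>) (sqrt (v (snd z))) (fst z)))) A"
    by (subst emeasure_density) (auto simp: normal_density_def)
  finally show "emeasure (cond_normal_law \<mu> \<beta> v) A = emeasure (density lborel (\<lambda>z. ennreal (g (snd z) * normal_density (snd z * \<beta>) (sqrt (v (snd z))) (fst z)))) A" .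
qed

end



lemma poly_int:
  fixes l u a0 a1 a2 :: real assumes "l \<le> u"
  shows "integrable lborel (\<lambda>x. indicator {l..u} x * (a0 + a1 * x + a2 * x\<^sup>2))"
    and "(\<integral>x. indicator {l..u} x * (a0 + a1 * x + a2 * x\<^sup>2) \<partial>lborel)
          = (a0*u + a1*u\<^sup>2/2 + a2*u^3/3) - (a0*l + a1*l\<^sup>2/2 + a2*l^3/3)"
proof -
  have c: "continuous_on {l..u} (\<lambda>x. a0 + a1 * x + a2 * x\<^sup>2)"
    by (intro continuous_intros)
  show "integrable lborel (\<lambda>x. indicator {l..u} x * (a0 + a1 * x + a2 * x\<^sup>2))"
    using borel_integrable_atLeastAtMost'[OF c] unfolding set_integrable_def by simp
  have "(\<integral>x. indicator {l..u} x *\<^sub>R (a0 + a1 * x + a2 * x\<^sup>2) \<partial>lborel)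
          = (\<lambda>t. a0*t + a1*t\<^sup>2/2 + a2*t^3/3) u - (\<lambda>t. a0*t + a1*t\<^sup>2/2 + a2*t^3/3) l"
  proof (rule integral_FTC_atLeastAtMost[OF assms _ c])
    fix x
    have "((\<lambda>t. a0*t + a1*t\<^sup>2/2 + a2*t^3/3) has_field_derivative (a0 + a1 * x + a2 * x\<^sup>2)) (at x within {l..u})"
      by (auto intro!: derivative_eq_intros simp: power2_eq_square field_simps)
    then show "((\<lambda>t. a0*t + a1*t\<^sup>2/2 + a2*t^3/3) has_vector_derivative (a0 + a1 * x + a2 * x\<^sup>2)) (at x within {l..u})"
      by (simp add: has_real_derivative_iff_has_vector_derivative)
  qed
  then show "(\<integral>x. indicator {l..u} x * (a0 + a1 * x + a2 * x\<^sup>2) \<partial>lborel)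
          = (a0*u + a1*u\<^sup>2/2 + a2*u^3/3) - (a0*l + a1*l\<^sup>2/2 + a2*l^3/3)" by simp
qed

definition mixd :: "real \<Rightarrow> real \<Rightarrow> real \<Rightarrow> real \<Rightarrow> real \<Rightarrow> real \<Rightarrow> real" where
  "mixd c L wA wB wC x = wA / c * indicator {c..2*c} x + wB / c * indicator {-2*c..-c} x
     + wC / (c*L) * indicator {-2*c*L..-c*L} x"

lemma mixd_meas[measurable]: "mixd c L wA wB wC \<in> borel_measurable borel"
  unfolding mixd_def by measurable

lemma mixd_nonneg: "0 < c \<Longrightarrow> 0 < L \<Longrightarrow> 0 \<le> wA \<Longrightarrow> 0 \<le> wB \<Longrightarrow> 0 \<le> wC \<Longrightarrow> 0 \<le> mixd c L wA wB wC x"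
  unfolding mixd_def by (auto intro!: add_nonneg_nonneg mult_nonneg_nonneg)

lemma mix_int:
  fixes f :: "real \<Rightarrow> real"
  assumes c: "0 < c" and L: "2 < L" and w: "0 \<le> wA" "0 \<le> wB" "0 \<le> wC"
    and f[measurable]: "f \<in> borel_measurable borel"
    and hA: "\<And>x. c \<le> x \<Longrightarrow> x \<le> 2*c \<Longrightarrow> f x = a0 + a1 * x + a2 * x\<^sup>2"
    and hB: "\<And>x. -2*c \<le> x \<Longrightarrow> x \<le> -c \<Longrightarrow> f x = b0 + b1 * x + b2 * x\<^sup>2"
    and hC: "\<And>x. -2*c*L \<le> x \<Longrightarrow> x \<le> -c*L \<Longrightarrow> f x = d0 + d1 * x + d2 * x\<^sup>2"
  shows "integrable (density lborel (\<lambda>x. ennreal (mixd c L wA wB wC x))) f"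
    and "(\<integral>x. f x \<partial>density lborel (\<lambda>x. ennreal (mixd c L wA wB wC x)))
        = wA * (a0 + a1 * (3*c/2) + a2 * (7*c\<^sup>2/3)) + wB * (b0 - b1 * (3*c/2) + b2 * (7*c\<^sup>2/3))
          + wC * (d0 - d1 * (3*c*L/2) + d2 * (7*c\<^sup>2*L\<^sup>2/3))"
proof -
  have pw: "mixd c L wA wB wC x * f x =
      wA / c * (indicator {c..2*c} x * (a0 + a1 * x + a2 * x\<^sup>2))
    + wB / c * (indicator {-2*c..-c} x * (b0 + b1 * x + b2 * x\<^sup>2))
    + wC / (c*L) * (indicator {-2*c*L..-c*L} x * (d0 + d1 * x + d2 * x\<^sup>2))" for x
  proof -
    have cL: "c * 2 < c * L" using c L by simp
    have d23: "\<not> (x \<in> {-2*c..-c} \<and> x \<in> {-2*c*L..-c*L})" using cL by auto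
    consider "x \<in> {c..2*c}" | "x \<in> {-2*c..-c}" | "x \<in> {-2*c*L..-c*L}"
      | "x \<notin> {c..2*c} \<and> x \<notin> {-2*c..-c} \<and> x \<notin> {-2*c*L..-c*L}" by blast
    then show ?thesis
    proof cases
      case 1 then show ?thesis using c cL by (auto simp: mixd_def hA indicator_def)
    next
      case 2 then show ?thesis using c cL d23 by (auto simp: mixd_def hB indicator_def)
    next
      case 3 then show ?thesis using c cL d23 by (auto simp: mixd_def hC indicator_def)
    next
      case 4 then show ?thesis by (auto simp: mixd_def indicator_def)
    qed
  qed
  have cL: "c \<le> 2*c" "-2*c \<le> -c" "-2*c*L \<le> -c*L" using c L by auto
  note i1 = poly_int[OF cL(1), of a0 a1 a2] and i2 = poly_int[OF cL(2), of b0 b1 b2]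
    and i3 = poly_int[OF cL(3), of d0 d1 d2]
  have int: "integrable lborel (\<lambda>x. mixd c L wA wB wC x * f x)"
    unfolding pw using i1(1) i2(1) i3(1) by (intro Bochner_Integration.integrable_add integrable_mult_right)
  have nn: "AE x in lborel. 0 \<le> mixd c L wA wB wC x" using mixd_nonneg c L w by auto
  show "integrable (density lborel (\<lambda>x. ennreal (mixd c L wA wB wC x))) f"
    using int nn by (subst integrable_density) auto
  have "(\<integral>x. f x \<partial>density lborel (\<lambda>x. ennreal (mixd c L wA wB wC x))) = (\<integral>x. mixd c L wA wB wC x * f x \<partial>lborel)"
    using nn by (subst integral_density) auto
  also have "\<dots> = wA / c * ((a0*(2*c) + a1*(2*c)\<^sup>2/2 + a2*(2*c)^3/3) - (a0*c + a1*c\<^sup>2/2 + a2*c^3/3))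
    + wB / c * ((b0*(-c) + b1*(-c)\<^sup>2/2 + b2*(-c)^3/3) - (b0*(-2*c) + b1*(-2*c)\<^sup>2/2 + b2*(-2*c)^3/3))
    + wC / (c*L) * ((d0*(-c*L) + d1*(-c*L)\<^sup>2/2 + d2*(-c*L)^3/3) - (d0*(-2*c*L) + d1*(-2*c*L)\<^sup>2/2 + d2*(-2*c*L)^3/3))"
    unfolding pw using i1 i2 i3
    by (simp add: Bochner_Integration.integral_add Bochner_Integration.integrable_add integrable_mult_right)
  also have "\<dots> = wA * (a0 + a1 * (3*c/2) + a2 * (7*c\<^sup>2/3)) + wB * (b0 - b1 * (3*c/2) + b2 * (7*c\<^sup>2/3))
          + wC * (d0 - d1 * (3*c*L/2) + d2 * (7*c\<^sup>2*L\<^sup>2/3))"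
    using c L by (simp add: field_simps power2_eq_square power3_eq_cube)
  finally show "(\<integral>x. f x \<partial>density lborel (\<lambda>x. ennreal (mixd c L wA wB wC x)))
        = wA * (a0 + a1 * (3*c/2) + a2 * (7*c\<^sup>2/3)) + wB * (b0 - b1 * (3*c/2) + b2 * (7*c\<^sup>2/3))
          + wC * (d0 - d1 * (3*c*L/2) + d2 * (7*c\<^sup>2*L\<^sup>2/3))" .
qed



lemma ln_strict: fixes a t :: real assumes "0 < a" "0 < t" "t \<noteq> a"
  shows "ln a + 1 < ln t + a / t"
proof -
  have u: "0 < a / t" using assms by simp
  have ne: "a / t \<noteq> 1" using assms by simp
  have "ln (a/t) < a/t - 1"
    using ln_le_minus_one[OF u] ln_eq_minus_one[OF u] ne by fastforce
  moreover have "ln (a/t) = ln a - ln t" using assms by (simp add: ln_div)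
  ultimately show ?thesis by simp
qed

lemma ln_weak: fixes a t :: real assumes "0 < a" "0 < t"
  shows "ln a + 1 \<le> ln t + a / t"
  using assms ln_strict[OF assms] by (cases "t = a") auto

definition Fe :: "real \<Rightarrow> real \<Rightarrow> real \<times> real \<Rightarrow> real" where
  "Fe p \<kappa> \<gamma> = (1-2*p) * (ln (fst \<gamma>) + \<kappa> / fst \<gamma>) + p * (ln (snd \<gamma>) + \<kappa> / snd \<gamma>)
     + p * (ln (snd \<gamma>) + \<kappa> * p / snd \<gamma>)"

definition Gg :: "real \<Rightarrow> real \<Rightarrow> real \<times> real \<Rightarrow> real" where
  "Gg p \<kappa> \<gamma> = (1-2*p) * (fst \<gamma> - \<kappa>)\<^sup>2 + p * (snd \<gamma> - \<kappa>)\<^sup>2 + p * (snd \<gamma> - \<kappa> * p)\<^sup>2"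

definition Sg :: "real \<Rightarrow> real \<Rightarrow> real \<Rightarrow> real \<times> real \<Rightarrow> real" where
  "Sg p \<kappa> r \<gamma> = (r * ((1-2*p) / fst \<gamma> + (1+p) / snd \<gamma>)) powi (-2)
     * (r * \<kappa> * ((1-2*p) / (fst \<gamma>)\<^sup>2 + 2*p / (snd \<gamma>)\<^sup>2))"

context fixes p \<kappa> :: real assumes p: "0 < p" "p < 1/2" and k: "0 < \<kappa>"
begin

definition "g0 = (\<kappa>, \<kappa> * (1+p) / 2)"

lemma g0_Gamma: "g0 \<in> Gamma" using p k by (simp add: g0_def Gamma_def)

lemma Fe_strict: assumes "\<gamma> \<in> Gamma" "\<gamma> \<noteq> g0" shows "Fe p \<kappa> g0 < Fe p \<kappa> \<gamma>"
proof -
  obtain a b where ab: "\<gamma> = (a,b)" by fastforce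
  have a: "0 < a" and b: "0 < b" using assms(1) ab by (auto simp: Gamma_def)
  define mm where "mm = \<kappa> * (1+p) / 2"
  have m: "0 < mm" using p k by (simp add: mm_def)
  have g0e: "g0 = (\<kappa>, mm)" by (simp add: g0_def mm_def)
  have s1: "p * (\<kappa> / b) + p * (\<kappa> * p / b) = 2 * p * (mm / b)"
    using b by (simp add: mm_def field_simps)
  have s2: "p * (\<kappa> / mm) + p * (\<kappa> * p / mm) = 2 * p" 
  proof -
    have q: "\<kappa> / mm = 2 / (1+p)" using k p by (simp add: mm_def)
    have "p * (\<kappa> / mm) + p * (\<kappa> * p / mm) = p * (1+p) * (\<kappa>/mm)" by (simp add: algebra_simps)
    also have "\<dots> = 2 * p" unfolding q using p by simp
    finally show ?thesis .
  qed
  have e1: "Fe p \<kappa> \<gamma> = (1-2*p) * (ln a + \<kappa> / a) + 2*p * (ln b + mm / b)"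
    using s1 unfolding Fe_def ab by (simp add: algebra_simps)
  have e2: "Fe p \<kappa> g0 = (1-2*p) * (ln \<kappa> + 1) + 2*p * (ln mm + 1)"
    using s2 k unfolding Fe_def g0e by (simp add: algebra_simps)
  let ?m = mm
  have eq: "Fe p \<kappa> \<gamma> - Fe p \<kappa> g0 = (1-2*p) * ((ln a + \<kappa> / a) - (ln \<kappa> + 1)) + 2*p * ((ln b + ?m / b) - (ln ?m + 1))"
    unfolding e1 e2 by (simp add: algebra_simps)
  have h1: "ln \<kappa> + 1 \<le> ln a + \<kappa> / a" by (rule ln_weak[OF k a])
  have h2: "ln ?m + 1 \<le> ln b + ?m / b" by (rule ln_weak[OF m b])
  have "a \<noteq> \<kappa> \<or> b \<noteq> ?m" using assms(2) ab g0e by auto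
  then have "0 < (1-2*p) * ((ln a + \<kappa> / a) - (ln \<kappa> + 1)) + 2*p * ((ln b + ?m / b) - (ln ?m + 1))"
  proof
    assume "a \<noteq> \<kappa>"
    then have "ln \<kappa> + 1 < ln a + \<kappa> / a" by (rule ln_strict[OF k a])
    then show ?thesis using h2 p by (intro add_pos_nonneg) auto
  next
    assume "b \<noteq> ?m"
    then have "ln ?m + 1 < ln b + ?m / b" by (rule ln_strict[OF m b])
    then show ?thesis using h1 p by (intro add_nonneg_pos) auto
  qed
  then show ?thesis using eq by simp
qed

lemma Gg_strict: assumes "\<gamma> \<noteq> g0" shows "Gg p \<kappa> g0 < Gg p \<kappa> \<gamma>"
proof -
  obtain a b where ab: "\<gamma> = (a,b)" by fastforce
  have eq: "Gg p \<kappa> \<gamma> - Gg p \<kappa> g0 = (1-2*p) * (a - \<kappa>)\<^sup>2 + 2*p * (b - \<kappa> * (1+p) / 2)\<^sup>2"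
    using ab by (simp add: Gg_def g0_def field_simps power2_eq_square)
  have "a \<noteq> \<kappa> \<or> b \<noteq> \<kappa> * (1+p) / 2" using assms ab by (auto simp: g0_def)
  then have "0 < (1-2*p) * (a - \<kappa>)\<^sup>2 + 2*p * (b - \<kappa> * (1+p) / 2)\<^sup>2"
    using p by (auto intro: add_pos_nonneg add_nonneg_pos)
  then show ?thesis using eq by simp
qed

lemma argmin_unique:
  assumes "is_argmin_on F Gamma g" "\<And>\<gamma>. \<gamma> \<in> Gamma \<Longrightarrow> \<gamma> \<noteq> g0 \<Longrightarrow> F g0 < F \<gamma>"
  shows "g = g0"
proof (rule ccontr)
  assume "g \<noteq> g0"
  moreover have "g \<in> Gamma" "F g \<le> F g0" using assms(1) g0_Gamma unfolding is_argmin_on_def by auto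
  ultimately show False using assms(2) by fastforce
qed

lemma argmin_ex:
  assumes "\<And>\<gamma>. \<gamma> \<in> Gamma \<Longrightarrow> \<gamma> \<noteq> g0 \<Longrightarrow> F g0 < F \<gamma>"
  shows "is_argmin_on F Gamma g0"
  using assms g0_Gamma unfolding is_argmin_on_def by (metis order_le_less order_refl)

end



lemma powi_m2: "(x::real) powi (-2) = 1 / x\<^sup>2"
  by (simp add: power_int_minus divide_inverse)

lemma aux: fixes T \<kappa> r E :: real shows "0 < T \<Longrightarrow> 0 < \<kappa> \<Longrightarrow> 0 < r \<Longrightarrow> (r*(T/\<kappa>)) powi (-2) * (r*\<kappa>*(E/\<kappa>\<^sup>2)) = \<kappa>*E/(r*T\<^sup>2)"
  by (simp add: powi_m2 field_simps power2_eq_square)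

context fixes p \<kappa> r \<eta> :: real assumes p: "0 < p" "p \<le> 1/(100*\<eta>)" and k: "0 < \<kappa>" and r: "0 < r" and e: "1 \<le> \<eta>"
begin

lemma p2: "p < 1/2"
proof -
  have "1/(100*\<eta>) \<le> 1/100" using e by (simp add: field_simps)
  then show ?thesis using p by simp
qed

lemma p100: "p \<le> 1/100"
proof -
  have "1/(100*\<eta>) \<le> 1/100" using e by (simp add: field_simps)
  then show ?thesis using p by simp
qed

lemma Sg_lower: assumes "\<gamma> \<in> Gamma" shows "\<kappa> * p / (r * (2-p)) \<le> Sg p \<kappa> r \<gamma>"
proof -
  obtain a b where ab: "\<gamma> = (a,b)" by fastforce
  have a: "0 < a" and b: "0 < b" using assms ab by (auto simp: Gamma_def)
  define u where "u = 1/a"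
  define w where "w = 1/b"
  have u: "0 < u" and w: "0 < w" using a b by (auto simp: u_def w_def)
  define A where "A = 1 - 2*p"
  define B where "B = 1 + p"
  have A: "0 < A" and B: "0 < B" using p2 p by (auto simp: A_def B_def)
  have Sg: "Sg p \<kappa> r \<gamma> = r * \<kappa> * (A*u\<^sup>2 + 2*p*w\<^sup>2) / (r * (A*u + B*w))\<^sup>2"
    unfolding Sg_def ab A_def B_def u_def w_def powi_m2 by (simp add: power_divide)
  have cs: "(A*u + B*w)\<^sup>2 \<le> (A+B) * (A*u\<^sup>2 + B*w\<^sup>2)"
  proof -
    have "0 \<le> A*B*(u-w)\<^sup>2" using A B by simp
    then show ?thesis by (simp add: power2_eq_square algebra_simps)
  qed
  have h2: "p * (A*u\<^sup>2 + B*w\<^sup>2) \<le> A*u\<^sup>2 + 2*p*w\<^sup>2"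
  proof -
    have "p * (A*u\<^sup>2) \<le> A*u\<^sup>2" using p p2 A by (intro mult_left_le_one_le) auto
    moreover have "p * (B*w\<^sup>2) \<le> 2*p*w\<^sup>2" using p p2 by (auto simp: B_def intro!: mult_right_mono)
    ultimately show ?thesis by (simp add: algebra_simps)
  qed
  have AB: "A + B = 2 - p" by (simp add: A_def B_def)
  have key: "p * (A*u + B*w)\<^sup>2 \<le> (2-p) * (A*u\<^sup>2 + 2*p*w\<^sup>2)"
  proof -
    have "p * (A*u + B*w)\<^sup>2 \<le> p * ((2-p) * (A*u\<^sup>2 + B*w\<^sup>2))" using cs AB p by (intro mult_left_mono) auto
    also have "\<dots> = (2-p) * (p * (A*u\<^sup>2 + B*w\<^sup>2))" by simp
    also have "\<dots> \<le> (2-p) * (A*u\<^sup>2 + 2*p*w\<^sup>2)" using h2 p2 by (intro mult_left_mono) auto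
    finally show ?thesis .
  qed
  have pos: "0 < A*u + B*w" using A B u w by (simp add: add_pos_pos)
  define X where "X = A*u + B*w"
  define Q where "Q = A*u\<^sup>2 + 2*p*w\<^sup>2"
  have X: "0 < X" using pos by (simp add: X_def)
  have tp: "0 < 2 - p" using p2 by simp
  have "\<kappa> * p / (r * (2-p)) = \<kappa> * (p * X\<^sup>2) / (r * (2-p) * X\<^sup>2)" using X by simp
  also have "\<dots> \<le> \<kappa> * ((2-p) * Q) / (r * (2-p) * X\<^sup>2)"
    using key k r tp X unfolding X_def[symmetric] Q_def[symmetric]
    by (intro divide_right_mono mult_left_mono) auto
  also have "\<dots> = r * \<kappa> * Q / (r * X)\<^sup>2" using r tp X by (simp add: power_mult_distrib field_simps power2_eq_square)
  finally show ?thesis unfolding Sg X_def Q_def .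
qed

definition "gs = (\<kappa>, 2*\<kappa>*p/(1+p))"

lemma gs_Gamma: "gs \<in> Gamma" using p k by (simp add: gs_def Gamma_def)

lemma Sg_gs: "Sg p \<kappa> r gs \<le> 2 * p * \<kappa> / r"
proof -
  define D where "D = (1-2*p) + (1+p)\<^sup>2/(2*p)"
  have D: "1/(2*p) \<le> D"
  proof -
    have "1 \<le> (1+p)\<^sup>2" using p mult_nonneg_nonneg[of p p] by (simp add: power2_eq_square algebra_simps)
    then have "1/(2*p) \<le> (1+p)\<^sup>2/(2*p)" using p by (intro divide_right_mono) auto
    then show ?thesis using p2 by (simp add: D_def)
  qed
  have "0 < 1/(2*p)" using p by simp
  then have Dp: "0 < D" using D by linarith
  have e1: "(1-2*p) / \<kappa> + (1+p) / (2*\<kappa>*p/(1+p)) = D / \<kappa>"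
    using p k by (simp add: D_def field_simps power2_eq_square)
  have e2: "(1-2*p) / \<kappa>\<^sup>2 + 2*p / (2*\<kappa>*p/(1+p))\<^sup>2 = D / \<kappa>\<^sup>2"
    using p k by (simp add: D_def field_simps power2_eq_square)
  have "Sg p \<kappa> r gs = (r * (D/\<kappa>)) powi (-2) * (r * \<kappa> * (D / \<kappa>\<^sup>2))"
    unfolding Sg_def gs_def using e1 e2 by simp
  also have "\<dots> = \<kappa> / (r * D)" using Dp k r by (simp add: powi_m2 field_simps power2_eq_square)
  also have "\<dots> \<le> \<kappa> / (r * (1/(2*p)))" using D Dp k r p
    by (intro divide_left_mono mult_left_mono mult_pos_pos) auto
  also have "\<dots> = 2 * p * \<kappa> / r" using p r by simp
  finally show ?thesis .
qed

lemma Sg_g0: "\<kappa> / (18 * r) \<le> Sg p \<kappa> r (\<kappa>, \<kappa>*(1+p)/2)"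
proof -
  define E where "E = (1-2*p) + 8*p/(1+p)\<^sup>2"
  have "0 \<le> 8*p/(1+p)\<^sup>2" using p by simp
  then have E: "1/2 \<le> E" using p p100 unfolding E_def by linarith
  have "0 < \<kappa> * p" using p k by simp
  then have kp: "\<kappa> + \<kappa> * p \<noteq> 0" using k by linarith
  have q: "(1+p) / (\<kappa>*(1+p)/2) = 2 / \<kappa>" using p k by (simp add: divide_simps)
  have "(1-2*p) / \<kappa> + 2 / \<kappa> = ((1-2*p) + 2) / \<kappa>" by (rule add_divide_distrib[symmetric])
  also have "(1-2*p) + 2 = 3 - 2*p" by simp
  finally have e1: "(1-2*p) / \<kappa> + (1+p) / (\<kappa>*(1+p)/2) = (3-2*p) / \<kappa>" unfolding q .
  have e2: "(1-2*p) / \<kappa>\<^sup>2 + 2*p / (\<kappa>*(1+p)/2)\<^sup>2 = E / \<kappa>\<^sup>2"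
  proof -
    have p1: "1 + p \<noteq> 0" using p by simp
    have q2: "2*p / (\<kappa>*(1+p)/2)\<^sup>2 = (8*p/(1+p)\<^sup>2) / \<kappa>\<^sup>2"
      using p1 k by (simp add: power_mult_distrib power_divide field_simps) (simp add: power2_eq_square algebra_simps)
    show ?thesis unfolding q2 E_def by (rule add_divide_distrib[symmetric])
  qed
  have "Sg p \<kappa> r (\<kappa>, \<kappa>*(1+p)/2) = (r * ((3-2*p)/\<kappa>)) powi (-2) * (r * \<kappa> * (E / \<kappa>\<^sup>2))"
    unfolding Sg_def using e1 e2 by simp
  also have "\<dots> = \<kappa> * E / (r * (3-2*p)\<^sup>2)" using p2 k r by (intro aux) auto
  also have "\<kappa> / (18 * r) \<le> \<kappa> * E / (r * (3-2*p)\<^sup>2)"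
  proof -
    have t: "(3-2*p)\<^sup>2 \<le> 9" using power_mono[of "3-2*p" 3 2] p p2 by simp
    have t0: "0 < (3-2*p)\<^sup>2" using p2 by simp
    have "\<kappa> / (18 * r) = \<kappa> * (1/2) / (r * 9)" by simp
    also have "\<dots> \<le> \<kappa> * E / (r * 9)" using E k r by (intro divide_right_mono mult_left_mono) auto
    also have "\<dots> \<le> \<kappa> * E / (r * (3-2*p)\<^sup>2)" using E k r t t0
      by (intro divide_left_mono mult_left_mono mult_pos_pos) auto
    finally show ?thesis .
  qed
  finally show ?thesis .
qed

lemma ratio: "\<eta> \<le> Sg p \<kappa> r (\<kappa>, \<kappa>*(1+p)/2) / (INF \<gamma>\<in>Gamma. Sg p \<kappa> r \<gamma>)"
proof -
  let ?I = "INF \<gamma>\<in>Gamma. Sg p \<kappa> r \<gamma>"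
  have ne: "Gamma \<noteq> {}" using gs_Gamma by auto
  have bdd: "bdd_below (Sg p \<kappa> r ` Gamma)" by (rule bdd_belowI2[where m="\<kappa> * p / (r * (2-p))"]) (rule Sg_lower)
  have lo: "\<kappa> * p / (r * (2-p)) \<le> ?I" using Sg_lower ne by (intro cINF_greatest) auto
  have lop: "0 < \<kappa> * p / (r * (2-p))" using k p r p2 by simp
  have I0: "0 < ?I" using lo lop by linarith
  have up: "?I \<le> 2 * p * \<kappa> / r" using cINF_lower[OF bdd gs_Gamma] Sg_gs by linarith
  have s0: "\<kappa> / (18 * r) \<le> Sg p \<kappa> r (\<kappa>, \<kappa>*(1+p)/2)" by (rule Sg_g0)
  have s0p: "0 \<le> Sg p \<kappa> r (\<kappa>, \<kappa>*(1+p)/2)" using s0 k r by (smt (verit) divide_pos_pos mult_pos_pos)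
  have "\<eta> \<le> 1 / (36 * p)"
  proof -
    have "p * \<eta> \<le> 1/100" using p e by (simp add: field_simps)
    then have "36 * p * \<eta> \<le> 1" by simp
    then show ?thesis using p by (simp add: field_simps)
  qed
  also have "1 / (36 * p) = (\<kappa> / (18 * r)) / (2 * p * \<kappa> / r)" using k r p by (simp add: field_simps)
  also have "\<dots> \<le> Sg p \<kappa> r (\<kappa>, \<kappa>*(1+p)/2) / (2 * p * \<kappa> / r)"
    using s0 k r p by (intro divide_right_mono) auto
  also have "\<dots> \<le> Sg p \<kappa> r (\<kappa>, \<kappa>*(1+p)/2) / ?I"
    using s0p I0 up k r p by (intro divide_left_mono) auto
  finally show ?thesis .
qed

end



lemma nu_meas[measurable]: "nu \<gamma> \<in> borel_measurable borel"
  unfolding nu_def by measurable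

lemma params:
  fixes \<alpha> \<eta> s :: real assumes "0 < \<alpha>" "1 \<le> \<eta>"
  and s_def: "s = min (1/(10*\<eta>)) ((1 - exp(-\<alpha>))/2)"
  shows "0 < s" "s \<le> 1/10" "s\<^sup>2 \<le> 1/(100*\<eta>)" "s\<^sup>2 \<le> 1 - exp(-\<alpha>)" "s\<^sup>2 \<le> s / 10"
proof -
  have e1: "exp (-\<alpha>) < 1" using assms by simp
  show s0: "0 < s" unfolding s_def using assms e1 by simp
  have s1: "s \<le> 1/(10*\<eta>)" unfolding s_def by simp
  have "1/(10*\<eta>) \<le> 1/10" using assms by (simp add: field_simps)
  then show s10: "s \<le> 1/10" using s1 by simp
  have "s\<^sup>2 \<le> (1/(10*\<eta>))\<^sup>2" using s0 s1 by (intro power_mono) auto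
  also have "\<dots> = 1/(100*\<eta>) * (1/\<eta>)" by (simp add: power2_eq_square)
  also have "\<dots> \<le> 1/(100*\<eta>)" using assms by (intro mult_left_le) auto
  finally show "s\<^sup>2 \<le> 1/(100*\<eta>)" .
  show ss: "s\<^sup>2 \<le> s / 10" using s0 s10 by (simp add: power2_eq_square) 
  have "s \<le> (1 - exp(-\<alpha>))/2" unfolding s_def by (rule min.cobounded2)
  moreover have "s/10 \<le> s" using s0 by simp
  moreover have "(1 - exp(-\<alpha>))/2 \<le> 1 - exp(-\<alpha>)" using e1 by simp
  ultimately show "s\<^sup>2 \<le> 1 - exp(-\<alpha>)" using ss by (meson order_trans)
qed

lemma mix_prob:
  assumes c: "0 < c" and L: "2 < L" and w: "0 \<le> wA" "0 \<le> wB" "0 \<le> wC" and sum: "wA + wB + wC = 1"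
  shows "prob_space (density lborel (\<lambda>x. ennreal (mixd c L wA wB wC x)))"
proof (rule prob_spaceI)
  let ?g = "mixd c L wA wB wC"
  have nn: "AE x in lborel. 0 \<le> ?g x" using mixd_nonneg c L w by auto
  note mi = mix_int[OF c L w, of "\<lambda>_. 1" 1 0 0 1 0 0 1 0 0]
  have i1: "integrable (density lborel (\<lambda>x. ennreal (?g x))) (\<lambda>_. 1::real)" using mi(1) by simp
  have "integrable lborel (\<lambda>x. ?g x *\<^sub>R (1::real))"
    using i1 nn by (subst integrable_density[symmetric]) auto
  then have ig: "integrable lborel ?g" by simp
  have "(\<integral>x. ?g x \<partial>lborel) = (\<integral>x. 1 \<partial>density lborel (\<lambda>x. ennreal (?g x)))"
    using nn by (subst integral_density) auto
  also have "\<dots> = 1" using mi(2) sum by simp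
  finally have "(\<integral>x. ?g x \<partial>lborel) = 1" .
  then have "(\<integral>\<^sup>+x. ennreal (?g x) \<partial>lborel) = 1"
    using ig nn by (subst nn_integral_eq_integral) auto
  then show "emeasure (density lborel (\<lambda>x. ennreal (?g x))) (space (density lborel (\<lambda>x. ennreal (?g x)))) = 1"
    by (simp add: emeasure_density)
qed



lemma gen1: fixes p K L2 ia ib X Y Z :: real shows "(1-2*p)*(0 + 0*X + ia*K) + p*(0 - 0*Y + ib*K) + p*(0 - 0*Z + ib*(K*L2)) = K*((1-2*p)*ia + (p + p*L2)*ib)"
  by (simp add: algebra_simps)
lemma gen2: fixes p K L2 ia ib X Y Z :: real shows "(1-2*p)*(0 + 0*X + ia*K) + p*(0 - 0*Y + ib*K) + p*(0 - 0*Z + (ib*p)*(K*L2)) = K*((1-2*p)*ia + (p + p*(p*L2))*ib)"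
  by (simp add: algebra_simps)

lemma aux1: fixes p c L a b X Y Z :: real shows "(1-2*p)*(0 + 0*X + (1/a)*(7*c\<^sup>2/3)) + p*(0 - 0*Y + (1/b)*(7*c\<^sup>2/3)) + p*(0 - 0*Z + (1/b)*(7*c\<^sup>2*L\<^sup>2/3)) = 7*c\<^sup>2/3 * ((1-2*p)/a + (p + p*L\<^sup>2)/b)"
proof -
  have e: "7*c\<^sup>2*L\<^sup>2/3 = (7*c\<^sup>2/3)*L\<^sup>2" by simp
  show ?thesis unfolding e gen1 by simp
qed

lemma aux2: fixes p c L a b k X Y Z :: real shows "(1-2*p)*(0 + 0*X + (k/a\<^sup>2)*(7*c\<^sup>2/3)) + p*(0 - 0*Y + (k/b\<^sup>2)*(7*c\<^sup>2/3)) + p*(0 - 0*Z + (k*p/b\<^sup>2)*(7*c\<^sup>2*L\<^sup>2/3)) = 7*c\<^sup>2/3*k*((1-2*p)/a\<^sup>2 + (p + p*(p*L\<^sup>2))/b\<^sup>2)"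
proof -
  have e: "7*c\<^sup>2*L\<^sup>2/3 = (7*c\<^sup>2/3)*L\<^sup>2" by simp
  have e2: "k*p/b\<^sup>2 = (k/b\<^sup>2)*p" by simp
  have e3: "7*c\<^sup>2/3*((1-2*p)*(k/a\<^sup>2) + (p + p*(p*L\<^sup>2))*(k/b\<^sup>2)) = 7*c\<^sup>2/3*k*((1-2*p)/a\<^sup>2 + (p + p*(p*L\<^sup>2))/b\<^sup>2)"
    by (simp add: algebra_simps add_divide_distrib)
  show ?thesis unfolding e e2 gen2 e3 ..
qed

lemma vaux: fixes c p t :: real shows "7*c\<^sup>2/3*(2-p) - (3*c/2*t)\<^sup>2 = c\<^sup>2*(7/3*(2-p) - 9/4*t\<^sup>2)"
  by (simp add: power2_eq_square field_simps)

theorem proposition1: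
  fixes \<beta> \<tau> \<sigma> \<alpha> \<eta> :: real
  assumes "0 < \<tau>" and "0 < \<sigma>" and "0 < \<alpha>" and "1 \<le> \<eta>"
  shows "\<exists>\<mu> v. het_model \<mu> v \<and>
    (let P = cond_normal_law \<mu> \<beta> v in
       absolutely_continuous lborel P \<and>
       (\<forall>\<epsilon>>0. \<exists>Pt. in_Hom \<beta> Pt \<and> absolutely_continuous lborel Pt \<and>
              absolutely_continuous P Pt \<and> integrable Pt (entropy_density (exp 1) P Pt) \<and>
              KL Pt P \<le> \<alpha> + \<epsilon>) \<and>
       integrable P (\<lambda>z. (snd z)\<^sup>2) \<and>
       (\<integral>z. (snd z - (\<integral>w. snd w \<partial>P))\<^sup>2 \<partial>P) = \<tau>\<^sup>2 \<and>
       (\<integral>z. v (snd z) \<partial>P) = \<sigma>\<^sup>2 \<and>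
       integrable P (\<lambda>z. v (snd z) * (snd z)\<^sup>2) \<and>
       (\<exists>g. is_argmin_on (eqml_obj P v) Gamma g) \<and>
       (\<exists>g. is_argmin_on (gee_obj P v) Gamma g) \<and>
       (\<forall>ge gg. is_argmin_on (eqml_obj P v) Gamma ge \<longrightarrow> is_argmin_on (gee_obj P v) Gamma gg \<longrightarrow>
          min (sandwich P v ge) (sandwich P v gg) / (INF \<gamma>\<in>Gamma. sandwich P v \<gamma>) \<ge> \<eta>))"
proof -
  define s where "s = min (1/(10*\<eta>)) ((1 - exp(-\<alpha>))/2)"
  note ps = params[OF assms(3,4) s_def]
  define p where "p = s\<^sup>2"
  define L where "L = 1/s"
  have s0: "0 < s" and s10: "s \<le> 1/10" and p100: "p \<le> 1/(100*\<eta>)" and pa: "p \<le> 1 - exp(-\<alpha>)"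
    and ps10: "p \<le> s/10" using ps by (auto simp: p_def)
  have p0: "0 < p" using s0 by (simp add: p_def)
  have p4: "p \<le> 1/100" using ps10 s10 by simp
  have L2: "2 < L" using s0 s10 by (simp add: L_def field_simps)
  have pL2: "p * L\<^sup>2 = 1" using s0 by (simp add: p_def L_def power2_eq_square)
  have pL: "p * L = s" using s0 by (simp add: p_def L_def power2_eq_square)
  define V0 where "V0 = 7/3*(2-p) - 9/4*(1-3*p-s)\<^sup>2"
  have V0: "0 < V0"
  proof -
    have "\<bar>1-3*p-s\<bar> \<le> 1" using p0 s0 p4 s10 by linarith
    then have "(1-3*p-s)\<^sup>2 \<le> 1" by (simp add: abs_square_le_1)
    then show ?thesis using p4 by (simp add: V0_def)
  qed
  define c where "c = \<tau> / sqrt V0"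
  have c0: "0 < c" using assms(1) V0 by (simp add: c_def)
  have cc: "c\<^sup>2 * V0 = \<tau>\<^sup>2" using V0 by (simp add: c_def power_divide)
  define \<kappa> where "\<kappa> = \<sigma>\<^sup>2/(1-p+p\<^sup>2)"
  have den: "0 < 1-p+p\<^sup>2" using p4 p0 zero_le_power2[of p] by linarith
  have k0: "0 < \<kappa>" using assms(2) den by (simp add: \<kappa>_def)
  have kk: "\<kappa> * (1-p+p\<^sup>2) = \<sigma>\<^sup>2" using den by (simp add: \<kappa>_def)
  define \<mu> where "\<mu> = density lborel (\<lambda>x. ennreal (mixd c L (1-2*p) p p x))"
  define v where "v = (\<lambda>x::real. \<kappa> * (if -2*c \<le> x then 1 else p))"
  have vm[measurable]: "v \<in> borel_measurable borel" unfolding v_def by measurable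
  have vpos: "\<And>x. 0 < v x" using k0 p0 by (simp add: v_def)
  have M: "sets \<mu> = sets borel" by (simp add: \<mu>_def)
  have w: "0 \<le> 1-2*p" "0 \<le> p" using p4 p0 by auto
  have pr: "prob_space \<mu>" unfolding \<mu>_def by (rule mix_prob[OF c0 L2 w w(2)]) simp
  note MI = mix_int[OF c0 L2 w w(2), folded \<mu>_def]
  have cL: "c * 2 < c * L" using c0 L2 by simp
  have vA: "\<And>x. c \<le> x \<Longrightarrow> v x = \<kappa>" using c0 by (simp add: v_def)
  have vB: "\<And>x. -2*c \<le> x \<Longrightarrow> v x = \<kappa>" by (simp add: v_def)
  have vC: "\<And>x. x \<le> -c*L \<Longrightarrow> v x = \<kappa> * p" using cL by (simp add: v_def)
  have nuA: "\<And>x \<gamma>. c \<le> x \<Longrightarrow> nu \<gamma> x = fst \<gamma>" using c0 by (simp add: nu_def)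
  have nuB: "\<And>x \<gamma>. x \<le> -c \<Longrightarrow> nu \<gamma> x = snd \<gamma>" using c0 by (simp add: nu_def)
  have cLp: "0 < c*L" using c0 L2 by simp
  have nuC: "\<And>x \<gamma>. x \<le> -c*L \<Longrightarrow> nu \<gamma> x = snd \<gamma>" using cLp by (simp add: nu_def)
  note ic = integral_cnl[OF vm vpos M pr]
  have Iv: "integrable \<mu> v"
    by (rule MI(1)[of v \<kappa> 0 0 \<kappa> 0 0 "\<kappa>*p" 0 0]; simp add: vA vB vC)
  have "(\<integral>x. v x \<partial>\<mu>) = (1-2*p) * (\<kappa> + 0 * (3*c/2) + 0 * (7*c\<^sup>2/3)) + p * (\<kappa> - 0 * (3*c/2) + 0 * (7*c\<^sup>2/3))
     + p * (\<kappa>*p - 0 * (3*c*L/2) + 0 * (7*c\<^sup>2*L\<^sup>2/3))" by (rule MI(2)) (auto simp: vA vB vC)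
  then have Iv2: "(\<integral>x. v x \<partial>\<mu>) = \<sigma>\<^sup>2" using kk by (simp add: algebra_simps power2_eq_square)
  define m where "m = (1-2*p)*(3*c/2) - p*(3*c/2) - p*(3*c*L/2)"
  have "(\<integral>x. x \<partial>\<mu>) = (1-2*p) * (0 + 1 * (3*c/2) + 0 * (7*c\<^sup>2/3)) + p * (0 - 1 * (3*c/2) + 0 * (7*c\<^sup>2/3))
     + p * (0 - 1 * (3*c*L/2) + 0 * (7*c\<^sup>2*L\<^sup>2/3))" by (rule MI(2)) auto
  then have Ix: "(\<integral>x. x \<partial>\<mu>) = m" by (simp add: m_def)
  have Ivar: "(\<integral>x. (x - m)\<^sup>2 \<partial>\<mu>) = (1-2*p)*(m\<^sup>2 + (-2*m)*(3*c/2) + 1*(7*c\<^sup>2/3)) + p*(m\<^sup>2 - (-2*m)*(3*c/2) + 1*(7*c\<^sup>2/3))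
       + p*(m\<^sup>2 - (-2*m)*(3*c*L/2) + 1*(7*c\<^sup>2*L\<^sup>2/3))"
    by (rule MI(2)) (auto simp: power2_eq_square algebra_simps)
  have Ix2: "integrable \<mu> (\<lambda>x. x\<^sup>2)"
    by (rule MI(1)[of "\<lambda>x. x\<^sup>2" 0 0 1 0 0 1 0 0 1]) auto
  have Ivx2: "integrable \<mu> (\<lambda>x. v x * x\<^sup>2)"
    by (rule MI(1)[of "\<lambda>x. v x * x\<^sup>2" 0 0 \<kappa> 0 0 \<kappa> 0 0 "\<kappa>*p"]; simp add: vA vB vC)
  have hm: "m = 3*c/2*(1-3*p-s)" unfolding m_def pL[symmetric] by (simp add: field_simps)
  have Ivar2: "(\<integral>x. (x - m)\<^sup>2 \<partial>\<mu>) = \<tau>\<^sup>2"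
  proof -
    have "(\<integral>x. (x - m)\<^sup>2 \<partial>\<mu>) = m\<^sup>2 - 2*m*((1-2*p)*(3*c/2) - p*(3*c/2) - p*(3*c*L/2)) + 7*c\<^sup>2/3*((1-2*p) + p + p*L\<^sup>2)"
      unfolding Ivar by (simp add: field_simps power2_eq_square)
    also have "\<dots> = 7*c\<^sup>2/3*(2-p) - m\<^sup>2" unfolding m_def[symmetric] pL2 by (simp add: power2_eq_square)
    also have "\<dots> = 7*c\<^sup>2/3*(2-p) - (3*c/2*(1-3*p-s))\<^sup>2" by (simp only: hm)
    also have "7*c\<^sup>2/3*(2-p) - (3*c/2*(1-3*p-s))\<^sup>2 = c\<^sup>2 * V0" unfolding V0_def by (rule vaux)
    finally show ?thesis using cc by simp
  qed
  have Ie: "(\<integral>x. ln (nu \<gamma> x) + v x / nu \<gamma> x \<partial>\<mu>) = Fe p \<kappa> \<gamma>" for \<gamma>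
  proof -
    have "(\<integral>x. ln (nu \<gamma> x) + v x / nu \<gamma> x \<partial>\<mu>) = (1-2*p) * ((ln (fst \<gamma>) + \<kappa> / fst \<gamma>) + 0 * (3*c/2) + 0 * (7*c\<^sup>2/3))
      + p * ((ln (snd \<gamma>) + \<kappa> / snd \<gamma>) - 0 * (3*c/2) + 0 * (7*c\<^sup>2/3))
      + p * ((ln (snd \<gamma>) + \<kappa> * p / snd \<gamma>) - 0 * (3*c*L/2) + 0 * (7*c\<^sup>2*L\<^sup>2/3))"
      by (rule MI(2)) (auto simp: vA vB vC nuA nuB nuC)
    then show ?thesis by (simp add: Fe_def)
  qed
  have Ig: "(\<integral>x. (nu \<gamma> x - v x)\<^sup>2 \<partial>\<mu>) = Gg p \<kappa> \<gamma>" for \<gamma>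
  proof -
    have "(\<integral>x. (nu \<gamma> x - v x)\<^sup>2 \<partial>\<mu>) = (1-2*p) * ((fst \<gamma> - \<kappa>)\<^sup>2 + 0 * (3*c/2) + 0 * (7*c\<^sup>2/3))
      + p * ((snd \<gamma> - \<kappa>)\<^sup>2 - 0 * (3*c/2) + 0 * (7*c\<^sup>2/3))
      + p * ((snd \<gamma> - \<kappa> * p)\<^sup>2 - 0 * (3*c*L/2) + 0 * (7*c\<^sup>2*L\<^sup>2/3))"
      by (rule MI(2)) (auto simp: vA vB vC nuA nuB nuC)
    then show ?thesis by (simp add: Gg_def)
  qed
  define r where "r = 7*c\<^sup>2/3"
  have r0: "0 < r" using c0 by (simp add: r_def)
  have IS1: "(\<integral>x. x\<^sup>2 / nu \<gamma> x \<partial>\<mu>) = r * ((1-2*p) / fst \<gamma> + (1+p) / snd \<gamma>)" for \<gamma>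
  proof -
    have "(\<integral>x. x\<^sup>2 / nu \<gamma> x \<partial>\<mu>) = (1-2*p) * (0 + 0 * (3*c/2) + (1 / fst \<gamma>) * (7*c\<^sup>2/3))
      + p * (0 - 0 * (3*c/2) + (1 / snd \<gamma>) * (7*c\<^sup>2/3))
      + p * (0 - 0 * (3*c*L/2) + (1 / snd \<gamma>) * (7*c\<^sup>2*L\<^sup>2/3))"
      by (rule MI(2)) (auto simp: nuA nuB nuC)
    also have "\<dots> = r * ((1-2*p) / fst \<gamma> + (p + p * L\<^sup>2) / snd \<gamma>)" unfolding r_def by (rule aux1)
    finally show ?thesis unfolding pL2 by (simp add: add.commute)
  qed
  have IS2: "(\<integral>x. v x * x\<^sup>2 / (nu \<gamma> x)\<^sup>2 \<partial>\<mu>) = r * \<kappa> * ((1-2*p) / (fst \<gamma>)\<^sup>2 + 2*p / (snd \<gamma>)\<^sup>2)" for \<gamma>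
  proof -
    have "(\<integral>x. v x * x\<^sup>2 / (nu \<gamma> x)\<^sup>2 \<partial>\<mu>) = (1-2*p) * (0 + 0 * (3*c/2) + (\<kappa> / (fst \<gamma>)\<^sup>2) * (7*c\<^sup>2/3))
      + p * (0 - 0 * (3*c/2) + (\<kappa> / (snd \<gamma>)\<^sup>2) * (7*c\<^sup>2/3))
      + p * (0 - 0 * (3*c*L/2) + (\<kappa> * p / (snd \<gamma>)\<^sup>2) * (7*c\<^sup>2*L\<^sup>2/3))"
      by (rule MI(2)) (auto simp: vA vB vC nuA nuB nuC)
    also have "\<dots> = r * \<kappa> * ((1-2*p) / (fst \<gamma>)\<^sup>2 + (p + p * (p * L\<^sup>2)) / (snd \<gamma>)\<^sup>2)" unfolding r_def by (rule aux2)
    finally show ?thesis unfolding pL2 by simp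
  qed
  define P where "P = cond_normal_law \<mu> \<beta> v"
  have SP: "sets P = sets borel" unfolding P_def by (rule sets_cnl[OF vm vpos M pr])
  have prP: "prob_space P" unfolding P_def by (rule prob_cnl[OF vm vpos M pr])
  have Pd: "P = density lborel (\<lambda>z. ennreal (mixd c L (1-2*p) p p (snd z) * normal_density (snd z * \<beta>) (sqrt (v (snd z))) (fst z)))"
    unfolding P_def by (rule cnl_density[OF vm vpos M pr \<mu>_def mixd_meas])
  have acP: "absolutely_continuous lborel P"
    unfolding Pd by (rule absolutely_continuousI_density) (unfold normal_density_def, measurable)
  have EP: "(\<integral>w. snd w \<partial>P) = m" using ic(1)[of "\<lambda>x. x"] Ix unfolding P_def by simp
  have VarP: "(\<integral>z. (snd z - (\<integral>w. snd w \<partial>P))\<^sup>2 \<partial>P) = \<tau>\<^sup>2"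
    unfolding EP using ic(1)[of "\<lambda>x. (x - m)\<^sup>2"] Ivar2 unfolding P_def by simp
  have x2P: "integrable P (\<lambda>z. (snd z)\<^sup>2)" using ic(2)[of "\<lambda>x. x\<^sup>2"] Ix2 unfolding P_def by simp
  have vP: "(\<integral>z. v (snd z) \<partial>P) = \<sigma>\<^sup>2" using ic(1)[of v] Iv2 unfolding P_def by simp
  have vx2P: "integrable P (\<lambda>z. v (snd z) * (snd z)\<^sup>2)" using ic(2)[of "\<lambda>x. v x * x\<^sup>2"] Ivx2 unfolding P_def by simp
  have eqP: "eqml_obj P v = Fe p \<kappa>"
  proof
    fix \<gamma>
    have fm: "(\<lambda>x. ln (nu \<gamma> x) + v x / nu \<gamma> x) \<in> borel_measurable borel" by measurable
    show "eqml_obj P v \<gamma> = Fe p \<kappa> \<gamma>" using ic(1)[OF fm] Ie[of \<gamma>] unfolding eqml_obj_def P_def by simp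
  qed
  have geP: "gee_obj P v = Gg p \<kappa>"
  proof
    fix \<gamma>
    have fm: "(\<lambda>x. (nu \<gamma> x - v x)\<^sup>2) \<in> borel_measurable borel" by measurable
    show "gee_obj P v \<gamma> = Gg p \<kappa> \<gamma>" using ic(1)[OF fm] Ig[of \<gamma>] unfolding gee_obj_def P_def by simp
  qed
  have saP: "sandwich P v = Sg p \<kappa> r"
  proof
    fix \<gamma>
    have fm1: "(\<lambda>x. x\<^sup>2 / nu \<gamma> x) \<in> borel_measurable borel" by measurable
    have fm2: "(\<lambda>x. v x * x\<^sup>2 / (nu \<gamma> x)\<^sup>2) \<in> borel_measurable borel" by measurable
    show "sandwich P v \<gamma> = Sg p \<kappa> r \<gamma>" using ic(1)[OF fm1] ic(1)[OF fm2] IS1[of \<gamma>] IS2[of \<gamma>]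
      unfolding sandwich_def P_def Sg_def by simp
  qed
  have ph: "p < 1/2" using p4 by simp
  have g0e: "g0 p \<kappa> = (\<kappa>, \<kappa>*(1+p)/2)" by (rule g0_def[OF p0 ph k0])
  have argE: "\<exists>g. is_argmin_on (eqml_obj P v) Gamma g" unfolding eqP
    using argmin_ex[OF p0 ph k0, of "Fe p \<kappa>"] Fe_strict[OF p0 ph k0] by blast
  have argG: "\<exists>g. is_argmin_on (gee_obj P v) Gamma g" unfolding geP
    using argmin_ex[OF p0 ph k0, of "Gg p \<kappa>"] Gg_strict[OF p0 ph k0] by blast
  have rat: "\<forall>ge gg. is_argmin_on (eqml_obj P v) Gamma ge \<longrightarrow> is_argmin_on (gee_obj P v) Gamma gg \<longrightarrow>
          min (sandwich P v ge) (sandwich P v gg) / (INF \<gamma>\<in>Gamma. sandwich P v \<gamma>) \<ge> \<eta>"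
  proof (intro allI impI)
    fix ge gg assume ge: "is_argmin_on (eqml_obj P v) Gamma ge" and gg: "is_argmin_on (gee_obj P v) Gamma gg"
    have "ge = g0 p \<kappa>" using ge unfolding eqP by (rule argmin_unique[OF p0 ph k0]) (rule Fe_strict[OF p0 ph k0])
    moreover have "gg = g0 p \<kappa>" using gg unfolding geP by (rule argmin_unique[OF p0 ph k0]) (rule Gg_strict[OF p0 ph k0])
    ultimately show "min (sandwich P v ge) (sandwich P v gg) / (INF \<gamma>\<in>Gamma. sandwich P v \<gamma>) \<ge> \<eta>"
      unfolding saP g0e using ratio[OF p0 p100 k0 r0 assms(4)] by simp
  qed
  define wA where "wA = (1-2*p)/(1-p)"
  define wB where "wB = p/(1-p)"
  have p1: "0 < 1 - p" using p4 by simp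
  have wt: "0 \<le> wA" "0 \<le> wB" "0 \<le> (0::real)" using w p1 by (auto simp: wA_def wB_def)
  define \<mu>t where "\<mu>t = density lborel (\<lambda>x. ennreal (mixd c L wA wB 0 x))"
  have prt: "prob_space \<mu>t" unfolding \<mu>t_def
    by (rule mix_prob[OF c0 L2 wt]) (use p1 in \<open>simp add: wA_def wB_def add_divide_distrib[symmetric]\<close>)
  have Mt: "sets \<mu>t = sets borel" by (simp add: \<mu>t_def)
  define vt where "vt = (\<lambda>_::real. (sqrt \<kappa>)\<^sup>2)"
  have vtm: "vt \<in> borel_measurable borel" by (simp add: vt_def)
  have vtpos: "\<And>x. 0 < vt x" using k0 by (simp add: vt_def)
  define Pt where "Pt = cond_normal_law \<mu>t \<beta> vt"
  have prPt: "prob_space Pt" unfolding Pt_def by (rule prob_cnl[OF vtm vtpos Mt prt])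
  have Ptd: "Pt = density lborel (\<lambda>z. ennreal (mixd c L wA wB 0 (snd z) * normal_density (snd z * \<beta>) (sqrt (vt (snd z))) (fst z)))"
    unfolding Pt_def by (rule cnl_density[OF vtm vtpos Mt prt \<mu>t_def mixd_meas])
  have acPt: "absolutely_continuous lborel Pt"
    unfolding Ptd by (rule absolutely_continuousI_density) (unfold normal_density_def vt_def, measurable)
  have homPt: "in_Hom \<beta> Pt" unfolding in_Hom_def
    using prt Mt k0 by (intro exI[of _ \<mu>t] exI[of _ "sqrt \<kappa>"]) (simp add: Pt_def vt_def)
  define F where "F = (\<lambda>z::real\<times>real. if -2*c \<le> snd z then 1/(1-p) else 0)"
  have Fm[measurable]: "F \<in> borel_measurable borel" unfolding F_def by measurable
  have F0: "\<And>z. 0 \<le> F z" using p1 by (simp add: F_def)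
  have PtF: "Pt = density P (\<lambda>z. ennreal (F z))"
  proof -
    have "density P (\<lambda>z. ennreal (F z)) = density lborel (\<lambda>z. ennreal (mixd c L (1-2*p) p p (snd z) * normal_density (snd z * \<beta>) (sqrt (v (snd z))) (fst z)) * ennreal (F z))"
      unfolding Pd by (rule density_density_eq) (unfold normal_density_def, measurable)
    also have "\<dots> = Pt" unfolding Ptd
    proof (intro arg_cong[where f="density lborel"] ext)
      fix z :: "real \<times> real"
      obtain y x where z: "z = (y, x)" by fastforce
      show "ennreal (mixd c L (1-2*p) p p (snd z) * normal_density (snd z * \<beta>) (sqrt (v (snd z))) (fst z)) * ennreal (F z)
          = ennreal (mixd c L wA wB 0 (snd z) * normal_density (snd z * \<beta>) (sqrt (vt (snd z))) (fst z))"
      proof (cases "-2*c \<le> x")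
        case True
        have vx: "v x = vt x" using True k0 by (simp add: v_def vt_def)
        have nC: "x \<notin> {-2*c*L..-c*L}" using True cL by auto
        have mx: "mixd c L wA wB 0 x = mixd c L (1-2*p) p p x * (1/(1-p))"
        proof -
          have iC: "indicator {-2*c*L..-c*L} x = (0::real)" using nC by simp
          show ?thesis unfolding mixd_def iC wA_def wB_def by (simp add: divide_inverse algebra_simps)
        qed
        have "ennreal (mixd c L (1-2*p) p p x * normal_density (x * \<beta>) (sqrt (v x)) y) * ennreal (F z)
            = ennreal (mixd c L (1-2*p) p p x * normal_density (x * \<beta>) (sqrt (v x)) y * F z)"
          using F0 by (simp add: ennreal_mult'')
        also have "\<dots> = ennreal (mixd c L wA wB 0 x * normal_density (x * \<beta>) (sqrt (vt x)) y)"
          using True z by (simp add: F_def mx vx)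
        finally show ?thesis using z by simp
      next
        case False
        have "mixd c L wA wB 0 x = 0" using False c0 by (simp add: mixd_def)
        then show ?thesis using False z by (simp add: F_def)
      qed
    qed
    finally show ?thesis ..
  qed
  have Fm': "(\<lambda>z. ennreal (F z)) \<in> borel_measurable P" using SP by (simp add: measurable_cong_sets[OF SP refl])
  have acPPt: "absolutely_continuous P Pt" unfolding PtF by (rule absolutely_continuousI_density[OF Fm'])
  have ED: "AE z in Pt. entropy_density (exp 1) P Pt z = ln (1/(1-p))"
  proof -
    interpret P: prob_space P by (rule prP)
    have "density P (RN_deriv P (density P (\<lambda>z. ennreal (F z)))) = density P (\<lambda>z. ennreal (F z))"
      by (rule density_RN_deriv_density[OF Fm'])
    then have RN: "AE z in P. RN_deriv P (density P (\<lambda>z. ennreal (F z))) z = ennreal (F z)"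
      by (intro P.density_unique) (auto simp: Fm')
    have "AE z in P. 0 < ennreal (F z) \<longrightarrow> entropy_density (exp 1) P Pt z = ln (1/(1-p))"
      using RN
    proof (rule AE_mp, intro AE_I2 impI)
      fix z assume "RN_deriv P (density P (\<lambda>z. ennreal (F z))) z = ennreal (F z)" "0 < ennreal (F z)"
      then show "entropy_density (exp 1) P Pt z = ln (1/(1-p))"
        unfolding PtF entropy_density_def using F0[of z] by (auto simp: F_def log_def split: if_splits)
    qed
    then show ?thesis unfolding PtF by (subst AE_density[OF Fm'])
  qed
  have SPt: "sets Pt = sets P" unfolding PtF by simp
  have edm: "entropy_density (exp 1) P Pt \<in> borel_measurable Pt"
    using measurable_entropy_density[of "exp 1" P Pt] by (simp add: measurable_cong_sets[OF SPt refl])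
  interpret Pt: prob_space Pt by (rule prPt)
  have intPt: "integrable Pt (entropy_density (exp 1) P Pt)"
    using integrable_cong_AE[OF edm _ ED] by simp
  have KLv: "KL Pt P = ln (1/(1-p))"
  proof -
    have "KL Pt P = (\<integral>z. entropy_density (exp 1) P Pt z \<partial>Pt)" by (simp add: KL_def KL_divergence_def)
    also have "\<dots> = (\<integral>z. ln (1/(1-p)) \<partial>Pt)" by (rule integral_cong_AE[OF edm _ ED]) simp
    also have "\<dots> = ln (1/(1-p))" using Pt.prob_space by simp
    finally show ?thesis .
  qed
  have KLa: "KL Pt P \<le> \<alpha>"
  proof -
    have "exp (-\<alpha>) \<le> 1 - p" using pa by simp
    then have "ln (exp (-\<alpha>)) \<le> ln (1 - p)" using p1 by (subst ln_le_cancel_iff) auto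
    then have "-\<alpha> \<le> ln (1-p)" by simp
    moreover have "ln (1/(1-p)) = - ln (1-p)" using p1 by (simp add: ln_div)
    ultimately show ?thesis unfolding KLv by simp
  qed
  have KLpart: "\<forall>\<epsilon>>0. \<exists>Pt. in_Hom \<beta> Pt \<and> absolutely_continuous lborel Pt \<and>
              absolutely_continuous P Pt \<and> integrable Pt (entropy_density (exp 1) P Pt) \<and>
              KL Pt P \<le> \<alpha> + \<epsilon>"
    using homPt acPt acPPt intPt KLa by (intro allI impI exI[of _ Pt]) auto
  have het: "het_model \<mu> v" unfolding het_model_def using pr M vm vpos Iv by auto
  show ?thesis
    apply (rule exI[of _ \<mu>], rule exI[of _ v])
    unfolding Let_def P_def[symmetric]
    using het acP KLpart x2P VarP vP vx2P argE argG rat by blast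
qed


end
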